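(* Assume (C1). Then for every $\kappa\in[p,+\infty]$, $\mathcal{D}$ is continuously embedded into $l^\kappa(\mathbb{Z},\mathbb{R})$, with $$\|u\|_{l^\kappa}\le b_0^{-1/p}\|u\|\quad\text{for all }u\in\mathcal{D}.$$ Moreover, for every $\kappa\in[p,+\infty]$ the embedding $\mathcal{D}\hookrightarrow l^\kappa(\mathbb{Z},\mathbb{R})$ is compact.
   Context: Fix real numbers $p,q,r$ with $1<p<q$, $\frac p2$ a positive integer, and $r\ge1$, and functions $a,b,c:\mathbb{Z}\to(0,+\infty)$. (C1): there is $b_0>0$ with $b(n)\ge b_0$ for all $n\in\mathbb{Z}$ and $\lim_{|n|\to\infty}b(n)=+\infty$. Notation and spaces: - $\Delta u(n)=u(n+1)-u(n)$. - $E$ is the set of real sequences $u=(u(n))_{n\in\mathbb{Z}}$ with $\|u\|:=\big(\sum_{n\in\mathbb{Z}}[a(n)|\Delta u(n)|^p+b(n)|u(n)|^p]\big)^{1/p}<\infty$. - $\mathcal{D}=\{u\in E:\sum_n c(n)|u(n)|^q\ln|u(n)|^r<+\infty\}$, where terms with $u(n)=0$ are read as $0$. It carries the norm $\|\cdot\|$. - For $1\le\kappa<\infty$, $l^\kappa(\mathbb{Z},\mathbb{R})$ is the space of real sequences with $\|u\|_{l^\kappa}=(\sum_n|u(n)|^\kappa)^{1/\kappa}<\infty$. - $l^\infty(\mathbb{Z},\mathbb{R})$ is the space of real sequences with $\|u\|_{l^\infty}=\sup_n|u(n)|<\infty$. *)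

theory Defs
  imports "HOL-Analysis.Analysis"
begin

definition fdiff :: "(int \<Rightarrow> real) \<Rightarrow> int \<Rightarrow> real" where
  "fdiff u n = u (n + 1) - u n"

definition E_terms :: "real \<Rightarrow> (int \<Rightarrow> real) \<Rightarrow> (int \<Rightarrow> real) \<Rightarrow> (int \<Rightarrow> real) \<Rightarrow> int \<Rightarrow> real" where
  "E_terms p a b u n = a n * \<bar>fdiff u n\<bar> powr p + b n * \<bar>u n\<bar> powr p"

definition in_E :: "real \<Rightarrow> (int \<Rightarrow> real) \<Rightarrow> (int \<Rightarrow> real) \<Rightarrow> (int \<Rightarrow> real) \<Rightarrow> bool" where
  "in_E p a b u \<longleftrightarrow> E_terms p a b u summable_on UNIV"

definition E_norm :: "real \<Rightarrow> (int \<Rightarrow> real) \<Rightarrow> (int \<Rightarrow> real) \<Rightarrow> (int \<Rightarrow> real) \<Rightarrow> real" where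
  "E_norm p a b u = (\<Sum>\<^sub>\<infinity>n. E_terms p a b u n) powr (1 / p)"

text \<open>Terms with u n = 0 are read as 0; ln |u n|^r is read as ln (|u n| powr r).\<close>
definition D_terms :: "real \<Rightarrow> real \<Rightarrow> (int \<Rightarrow> real) \<Rightarrow> (int \<Rightarrow> real) \<Rightarrow> int \<Rightarrow> real" where
  "D_terms q r c u n = (if u n = 0 then 0 else c n * \<bar>u n\<bar> powr q * ln (\<bar>u n\<bar> powr r))"

definition D_set :: "real \<Rightarrow> real \<Rightarrow> real \<Rightarrow> (int \<Rightarrow> real) \<Rightarrow> (int \<Rightarrow> real) \<Rightarrow> (int \<Rightarrow> real) \<Rightarrow> (int \<Rightarrow> real) set" where
  "D_set p q r a b c = {u. in_E p a b u \<and> D_terms q r c u summable_on UNIV}"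

definition in_lk :: "ereal \<Rightarrow> (int \<Rightarrow> real) \<Rightarrow> bool" where
  "in_lk \<kappa> u = (case \<kappa> of
      ereal k \<Rightarrow> (\<lambda>n. \<bar>u n\<bar> powr k) summable_on UNIV
    | PInfty \<Rightarrow> bdd_above (range (\<lambda>n. \<bar>u n\<bar>))
    | MInfty \<Rightarrow> False)"

definition lk_norm :: "ereal \<Rightarrow> (int \<Rightarrow> real) \<Rightarrow> real" where
  "lk_norm \<kappa> u = (case \<kappa> of
      ereal k \<Rightarrow> (\<Sum>\<^sub>\<infinity>n. \<bar>u n\<bar> powr k) powr (1 / k)
    | PInfty \<Rightarrow> (SUP n. \<bar>u n\<bar>)
    | MInfty \<Rightarrow> 0)"

end

theory Submission
  imports Defs
begin

lemma extract_subseq: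
  fixes U :: "nat \<Rightarrow> int \<Rightarrow> real"
  assumes "\<And>k n. \<bar>U k n\<bar> \<le> C"
  shows "\<exists>\<phi> v. strict_mono \<phi> \<and> (\<forall>n. (\<lambda>k. U (\<phi> k) n) \<longlonglongrightarrow> v n)"
proof -
  define S :: "(int \<Rightarrow> real) set" where "S = PiE UNIV (\<lambda>_. {-C..C})"
  have "compactin (product_topology (\<lambda>_. euclidean) UNIV) S"
    unfolding S_def by (subst compactin_PiE) auto
  hence "compact S" by (simp add: euclidean_product_topology)
  hence "seq_compact S" by (rule compact_imp_seq_compact)
  moreover have "\<And>k. U k \<in> S"
  proof -
    have b: "-C \<le> U k n \<and> U k n \<le> C" for k n using assms[of k n] by linarith
    show "\<And>k. U k \<in> S" by (auto simp: S_def b)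
  qed
  ultimately obtain v \<phi> where "v \<in> S" "strict_mono \<phi>" "(U \<circ> \<phi>) \<longlonglongrightarrow> v"
    unfolding seq_compact_def by meson
  moreover have "(\<lambda>k. U (\<phi> k) n) \<longlonglongrightarrow> v n" for n
  proof -
    have "isCont (\<lambda>x::int\<Rightarrow>real. x n) v"
      using continuous_on_product_coordinates[of n] continuous_on_eq_continuous_at by blast
    from isCont_tendsto_compose[OF this \<open>(U \<circ> \<phi>) \<longlonglongrightarrow> v\<close>] show ?thesis by (simp add: o_def)
  qed
  ultimately show ?thesis by blast
qed

lemma pow_split:
  fixes x C k p :: real
  assumes "\<bar>x\<bar> \<le> C" "p \<le> k"
  shows "\<bar>x\<bar> powr k \<le> C powr (k - p) * \<bar>x\<bar> powr p"
proof -
  have "\<bar>x\<bar> powr k = \<bar>x\<bar> powr (k - p) * \<bar>x\<bar> powr p" by (simp flip: powr_add)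
  also have "\<dots> \<le> C powr (k - p) * \<bar>x\<bar> powr p"
    by (rule mult_right_mono) (use assms in \<open>auto intro: powr_mono2\<close>)
  finally show ?thesis .
qed

lemma core:
  fixes u b :: "int \<Rightarrow> real"
  assumes p: "0 < p" and b0: "0 < b0" "\<forall>n. b0 \<le> b n"
    and sw: "(\<lambda>n. b n * \<bar>u n\<bar> powr p) summable_on UNIV"
    and T: "infsum (\<lambda>n. b n * \<bar>u n\<bar> powr p) UNIV \<le> T"
  shows "\<forall>n. \<bar>u n\<bar> \<le> (T/b0) powr (1/p)"
    and "(\<lambda>n. \<bar>u n\<bar> powr p) summable_on UNIV"
    and "infsum (\<lambda>n. \<bar>u n\<bar> powr p) UNIV \<le> T / b0"
    and "\<forall>k\<ge>p. (\<lambda>n. \<bar>u n\<bar> powr k) summable_on UNIV \<and> infsum (\<lambda>n. \<bar>u n\<bar> powr k) UNIV \<le> (T/b0) powr (k/p)"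
proof -
  have nn: "0 \<le> b n * \<bar>u n\<bar> powr p" for n using b0 by (smt (verit) mult_nonneg_nonneg powr_ge_zero)
  have pt: "\<bar>u n\<bar> powr p \<le> T / b0" for n
  proof -
    have "b0 * \<bar>u n\<bar> powr p \<le> b n * \<bar>u n\<bar> powr p" using b0 by (intro mult_right_mono) auto
    also have "\<dots> = sum (\<lambda>n. b n * \<bar>u n\<bar> powr p) {n}" by simp
    also have "\<dots> \<le> infsum (\<lambda>n. b n * \<bar>u n\<bar> powr p) UNIV"
      by (rule finite_sum_le_infsum) (use sw nn in auto)
    also have "\<dots> \<le> T" by (rule T)
    finally show ?thesis using b0 by (simp add: field_simps mult.commute)
  qed
  have T0: "0 \<le> T / b0" using pt[of 0] by (smt (verit) powr_ge_zero)
  define C where "C = (T/b0) powr (1/p)"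
  have C0: "0 \<le> C" by (simp add: C_def)
  have Cp: "C powr p = T / b0" using p T0 b0 by (simp add: C_def powr_powr abs_of_nonneg) (smt (verit) divide_nonneg_pos zero_le_divide_iff)
  show ptC: "\<forall>n. \<bar>u n\<bar> \<le> (T/b0) powr (1/p)"
  proof
    fix n
    have "\<bar>u n\<bar> = (\<bar>u n\<bar> powr p) powr (1/p)" using p by (simp add: powr_powr)
    also have "\<dots> \<le> (T/b0) powr (1/p)" using p pt[of n] by (intro powr_mono2) auto
    finally show "\<bar>u n\<bar> \<le> (T/b0) powr (1/p)" .
  qed
  have le1: "\<bar>u n\<bar> powr p \<le> b n * \<bar>u n\<bar> powr p * (1/b0)" for n
    using b0 by (simp add: field_simps) (metis b0(2) mult_right_mono powr_ge_zero mult.commute)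
  have sw': "(\<lambda>n. b n * \<bar>u n\<bar> powr p * (1/b0)) summable_on UNIV"
    by (rule summable_on_cmult_left[OF sw])
  show sp: "(\<lambda>n. \<bar>u n\<bar> powr p) summable_on UNIV"
    by (rule summable_on_comparison_test[OF sw']) (use le1 in auto)
  have "infsum (\<lambda>n. \<bar>u n\<bar> powr p) UNIV \<le> infsum (\<lambda>n. b n * \<bar>u n\<bar> powr p * (1/b0)) UNIV"
    by (rule infsum_mono[OF sp sw']) (use le1 in auto)
  also have "\<dots> = infsum (\<lambda>n. b n * \<bar>u n\<bar> powr p) UNIV * (1/b0)"
    by (rule infsum_cmult_left) (use sw in auto)
  also have "\<dots> \<le> T / b0" using T b0 by (simp add: divide_right_mono)
  finally show ip: "infsum (\<lambda>n. \<bar>u n\<bar> powr p) UNIV \<le> T / b0" .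
  show "\<forall>k\<ge>p. (\<lambda>n. \<bar>u n\<bar> powr k) summable_on UNIV \<and> infsum (\<lambda>n. \<bar>u n\<bar> powr k) UNIV \<le> (T/b0) powr (k/p)"
  proof (intro allI impI)
    fix k assume k: "p \<le> k"
    have le2: "\<bar>u n\<bar> powr k \<le> C powr (k - p) * \<bar>u n\<bar> powr p" for n
      by (rule pow_split) (use ptC k in \<open>auto simp: C_def\<close>)
    have sp': "(\<lambda>n. C powr (k - p) * \<bar>u n\<bar> powr p) summable_on UNIV"
      by (rule summable_on_cmult_right[OF sp])
    have sk: "(\<lambda>n. \<bar>u n\<bar> powr k) summable_on UNIV"
      by (rule summable_on_comparison_test[OF sp']) (use le2 in auto)
    have "infsum (\<lambda>n. \<bar>u n\<bar> powr k) UNIV \<le> infsum (\<lambda>n. C powr (k - p) * \<bar>u n\<bar> powr p) UNIV"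
      by (rule infsum_mono[OF sk sp']) (use le2 in auto)
    also have "\<dots> = C powr (k - p) * infsum (\<lambda>n. \<bar>u n\<bar> powr p) UNIV"
      by (rule infsum_cmult_right) (use sp in auto)
    also have "\<dots> \<le> C powr (k - p) * C powr p" using ip Cp by (intro mult_left_mono) auto
    also have "\<dots> = C powr k" by (simp flip: powr_add)
    also have "\<dots> = (T/b0) powr (k/p)" by (simp add: C_def powr_powr)
    finally show "(\<lambda>n. \<bar>u n\<bar> powr k) summable_on UNIV \<and> infsum (\<lambda>n. \<bar>u n\<bar> powr k) UNIV \<le> (T/b0) powr (k/p)"
      using sk by simp
  qed
qed

lemma conv0:
  fixes w :: "nat \<Rightarrow> int \<Rightarrow> real" and b :: "int \<Rightarrow> real"
  assumes p: "0 < p" and b0: "0 < b0" "\<forall>n. b0 \<le> b n" and lim: "filterlim b at_top cofinite"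
   and sw: "\<forall>k. (\<lambda>n. b n * \<bar>w k n\<bar> powr p) summable_on UNIV"
   and K: "\<forall>k. infsum (\<lambda>n. b n * \<bar>w k n\<bar> powr p) UNIV \<le> K"
   and pw: "\<forall>n. (\<lambda>k. w k n) \<longlonglongrightarrow> 0"
  shows "(\<lambda>k. infsum (\<lambda>n. \<bar>w k n\<bar> powr p) UNIV) \<longlonglongrightarrow> 0"
proof -
  have nn: "0 \<le> b n * \<bar>w k n\<bar> powr p" for n k using b0 by (smt (verit) mult_nonneg_nonneg powr_ge_zero)
  have sp: "(\<lambda>n. \<bar>w k n\<bar> powr p) summable_on UNIV" for k
    using core(2)[OF p b0 sw[rule_format, of k] K[rule_format, of k]] .
  have K0: "0 \<le> K" using K[rule_format, of 0] infsum_nonneg[of UNIV "\<lambda>n. b n * \<bar>w 0 n\<bar> powr p"] nn by force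
  show ?thesis
  proof (rule order_tendstoI)
    fix a :: real assume "a < 0"
    then show "\<forall>\<^sub>F k in sequentially. a < infsum (\<lambda>n. \<bar>w k n\<bar> powr p) UNIV"
      by (intro always_eventually allI) (smt (verit) infsum_nonneg powr_ge_zero)
  next
    fix e :: real assume e: "0 < e"
    define L where "L = 2 * K / e + 1"
    have L0: "0 < L" using K0 e by (simp add: L_def add_nonneg_pos)
    define F where "F = {n. b n < L}"
    have "eventually (\<lambda>n. L \<le> b n) cofinite" using lim by (simp add: filterlim_at_top)
    hence finF: "finite F" by (simp add: F_def eventually_cofinite not_le)
    have KL: "K / L < e / 2"
    proof -
      have "K < e / 2 * L" using e K0 by (simp add: L_def field_simps)
      thus ?thesis using L0 by (simp add: pos_divide_less_eq)
    qed
    have tail: "infsum (\<lambda>n. \<bar>w k n\<bar> powr p) (-F) \<le> K / L" for k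
    proof -
      have le1: "\<bar>w k n\<bar> powr p \<le> b n * \<bar>w k n\<bar> powr p * (1/L)" if "n \<in> -F" for n
      proof -
        have "L \<le> b n" using that by (simp add: F_def)
        hence "L * \<bar>w k n\<bar> powr p \<le> b n * \<bar>w k n\<bar> powr p" by (intro mult_right_mono) auto
        thus ?thesis using L0 by (simp add: field_simps mult.commute)
      qed
      have s1: "(\<lambda>n. \<bar>w k n\<bar> powr p) summable_on (-F)"
        by (rule summable_on_subset_banach[OF sp]) auto
      have s2: "(\<lambda>n. b n * \<bar>w k n\<bar> powr p) summable_on (-F)"
        by (rule summable_on_subset_banach[OF sw[rule_format]]) auto
      have s3: "(\<lambda>n. b n * \<bar>w k n\<bar> powr p * (1/L)) summable_on (-F)"
        by (rule summable_on_cmult_left[OF s2])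
      have "infsum (\<lambda>n. \<bar>w k n\<bar> powr p) (-F) \<le> infsum (\<lambda>n. b n * \<bar>w k n\<bar> powr p * (1/L)) (-F)"
        by (rule infsum_mono[OF s1 s3]) (use le1 in auto)
      also have "\<dots> = infsum (\<lambda>n. b n * \<bar>w k n\<bar> powr p) (-F) * (1/L)"
        by (rule infsum_cmult_left) (use s2 in auto)
      also have "\<dots> \<le> infsum (\<lambda>n. b n * \<bar>w k n\<bar> powr p) UNIV * (1/L)"
        by (intro mult_right_mono infsum_mono_neutral s2 sw[rule_format]) (use L0 nn in auto)
      also have "\<dots> \<le> K * (1/L)" using K L0 by (intro mult_right_mono) auto
      finally show ?thesis by simp
    qed
    have "(\<lambda>k. sum (\<lambda>n. \<bar>w k n\<bar> powr p) F) \<longlonglongrightarrow> 0"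
    proof (rule tendsto_null_sum)
      fix n assume "n \<in> F"
      have "(\<lambda>k. \<bar>w k n\<bar>) \<longlonglongrightarrow> 0" using pw tendsto_rabs_zero by blast
      thus "(\<lambda>k. \<bar>w k n\<bar> powr p) \<longlonglongrightarrow> 0"
        by (rule tendsto_zero_powrI) (use p in auto)
    qed
    hence ev: "\<forall>\<^sub>F k in sequentially. sum (\<lambda>n. \<bar>w k n\<bar> powr p) F < e / 2"
      using e by (intro order_tendstoD(2)) auto
    show "\<forall>\<^sub>F k in sequentially. infsum (\<lambda>n. \<bar>w k n\<bar> powr p) UNIV < e"
    proof (rule eventually_mono[OF ev])
      fix k assume lt: "sum (\<lambda>n. \<bar>w k n\<bar> powr p) F < e / 2"
      have "infsum (\<lambda>n. \<bar>w k n\<bar> powr p) (F \<union> -F) = infsum (\<lambda>n. \<bar>w k n\<bar> powr p) F + infsum (\<lambda>n. \<bar>w k n\<bar> powr p) (-F)"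
        by (rule infsum_Un_disjoint) (use finF in \<open>auto intro: summable_on_subset_banach[OF sp]\<close>)
      hence "infsum (\<lambda>n. \<bar>w k n\<bar> powr p) UNIV = sum (\<lambda>n. \<bar>w k n\<bar> powr p) F + infsum (\<lambda>n. \<bar>w k n\<bar> powr p) (-F)"
        using finF by simp
      thus "infsum (\<lambda>n. \<bar>w k n\<bar> powr p) UNIV < e" using lt tail[of k] KL by linarith
    qed
  qed
qed

lemma kbound:
  fixes u :: "int \<Rightarrow> real"
  assumes C: "\<forall>n. \<bar>u n\<bar> \<le> C" and sp: "(\<lambda>n. \<bar>u n\<bar> powr p) summable_on UNIV" and k: "p \<le> k"
  shows "(\<lambda>n. \<bar>u n\<bar> powr k) summable_on UNIV"
    and "infsum (\<lambda>n. \<bar>u n\<bar> powr k) UNIV \<le> C powr (k - p) * infsum (\<lambda>n. \<bar>u n\<bar> powr p) UNIV"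
proof -
  have le2: "\<bar>u n\<bar> powr k \<le> C powr (k - p) * \<bar>u n\<bar> powr p" for n
    by (rule pow_split) (use C k in auto)
  have sp': "(\<lambda>n. C powr (k - p) * \<bar>u n\<bar> powr p) summable_on UNIV"
    by (rule summable_on_cmult_right[OF sp])
  show sk: "(\<lambda>n. \<bar>u n\<bar> powr k) summable_on UNIV"
    by (rule summable_on_comparison_test[OF sp']) (use le2 in auto)
  have "infsum (\<lambda>n. \<bar>u n\<bar> powr k) UNIV \<le> infsum (\<lambda>n. C powr (k - p) * \<bar>u n\<bar> powr p) UNIV"
    by (rule infsum_mono[OF sk sp']) (use le2 in auto)
  also have "\<dots> = C powr (k - p) * infsum (\<lambda>n. \<bar>u n\<bar> powr p) UNIV"
    by (rule infsum_cmult_right) (use sp in auto)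
  finally show "infsum (\<lambda>n. \<bar>u n\<bar> powr k) UNIV \<le> C powr (k - p) * infsum (\<lambda>n. \<bar>u n\<bar> powr p) UNIV" .
qed

lemma sup_bound:
  fixes u :: "int \<Rightarrow> real"
  assumes p: "0 < p" and sp: "(\<lambda>n. \<bar>u n\<bar> powr p) summable_on UNIV"
  shows "\<bar>u n\<bar> \<le> (infsum (\<lambda>n. \<bar>u n\<bar> powr p) UNIV) powr (1/p)"
proof -
  have "\<bar>u n\<bar> powr p = sum (\<lambda>n. \<bar>u n\<bar> powr p) {n}" by simp
  also have "\<dots> \<le> infsum (\<lambda>n. \<bar>u n\<bar> powr p) UNIV"
    by (rule finite_sum_le_infsum[OF sp]) auto
  finally have le: "\<bar>u n\<bar> powr p \<le> infsum (\<lambda>n. \<bar>u n\<bar> powr p) UNIV" .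
  have "\<bar>u n\<bar> = (\<bar>u n\<bar> powr p) powr (1/p)" using p by (simp add: powr_powr)
  also have "\<dots> \<le> (infsum (\<lambda>n. \<bar>u n\<bar> powr p) UNIV) powr (1/p)" using p le by (intro powr_mono2) auto
  finally show ?thesis .
qed

lemma Dprops:
  fixes u a b :: "int \<Rightarrow> real"
  assumes a: "\<forall>n. 0 < a n" and b: "\<forall>n. 0 < b n" and E: "in_E p a b u"
  shows "(\<lambda>n. b n * \<bar>u n\<bar> powr p) summable_on UNIV"
    and "infsum (\<lambda>n. b n * \<bar>u n\<bar> powr p) UNIV \<le> infsum (E_terms p a b u) UNIV"
    and "0 \<le> infsum (E_terms p a b u) UNIV"
    and "E_norm p a b u = infsum (E_terms p a b u) UNIV powr (1/p)"
proof -
  have s: "E_terms p a b u summable_on UNIV" using E by (simp add: in_E_def)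
  have le: "b n * \<bar>u n\<bar> powr p \<le> E_terms p a b u n" for n
    using a by (simp add: E_terms_def less_imp_le)
  have nn: "0 \<le> b n * \<bar>u n\<bar> powr p" for n using b by (simp add: less_imp_le)
  show s2: "(\<lambda>n. b n * \<bar>u n\<bar> powr p) summable_on UNIV"
    by (rule summable_on_comparison_test[OF s]) (use le nn in auto)
  show "infsum (\<lambda>n. b n * \<bar>u n\<bar> powr p) UNIV \<le> infsum (E_terms p a b u) UNIV"
    by (rule infsum_mono[OF s2 s]) (use le in auto)
  show "0 \<le> infsum (E_terms p a b u) UNIV"
    by (rule infsum_nonneg) (use a b in \<open>simp add: E_terms_def less_imp_le\<close>)
  show "E_norm p a b u = infsum (E_terms p a b u) UNIV powr (1/p)" by (simp add: E_norm_def)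
qed

lemma diff_powr:
  fixes x y p :: real
  assumes "0 \<le> p"
  shows "\<bar>x - y\<bar> powr p \<le> 2 powr p * (\<bar>x\<bar> powr p + \<bar>y\<bar> powr p)"
proof -
  have "\<bar>x - y\<bar> powr p \<le> (2 * max \<bar>x\<bar> \<bar>y\<bar>) powr p"
    by (rule powr_mono2) (use assms in auto)
  also have "\<dots> = 2 powr p * max \<bar>x\<bar> \<bar>y\<bar> powr p" by (simp add: powr_mult)
  also have "\<dots> \<le> 2 powr p * (\<bar>x\<bar> powr p + \<bar>y\<bar> powr p)"
    by (intro mult_left_mono) (auto simp: max_def)
  finally show ?thesis .
qed

lemma part1:
  fixes a b :: "int \<Rightarrow> real" and \<kappa> :: ereal
  assumes p: "0 < p" and a: "\<forall>n. 0 < a n" and b: "\<forall>n. 0 < b n"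
    and b0: "0 < b0" "\<forall>n. b0 \<le> b n" and E: "in_E p a b u" and k: "ereal p \<le> \<kappa>"
  shows "in_lk \<kappa> u \<and> lk_norm \<kappa> u \<le> b0 powr (-1 / p) * E_norm p a b u"
proof -
  define T where "T = infsum (E_terms p a b u) UNIV"
  note D = Dprops[OF a b E, folded T_def]
  note c = core[OF p b0 D(1) D(2)]
  have key: "(T/b0) powr (1/p) = b0 powr (-1 / p) * E_norm p a b u"
    using D(3,4) b0 by (simp add: powr_divide powr_minus_divide)
  show ?thesis
  proof (cases \<kappa>)
    case (real k)
    hence kp: "p \<le> k" using k by simp
    have sk: "(\<lambda>n. \<bar>u n\<bar> powr k) summable_on UNIV" and ik: "infsum (\<lambda>n. \<bar>u n\<bar> powr k) UNIV \<le> (T/b0) powr (k/p)"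
      using c(4) kp by auto
    have "infsum (\<lambda>n. \<bar>u n\<bar> powr k) UNIV powr (1/k) \<le> ((T/b0) powr (k/p)) powr (1/k)"
      by (rule powr_mono2) (use ik p kp in \<open>auto intro: infsum_nonneg\<close>)
    also have "\<dots> = (T/b0) powr (1/p)" using p kp by (simp add: powr_powr)
    finally show ?thesis using sk key by (simp add: real in_lk_def lk_norm_def)
  next
    case PInf
    have bd: "bdd_above (range (\<lambda>n. \<bar>u n\<bar>))" using c(1) by (intro bdd_aboveI2) auto
    have "(SUP n. \<bar>u n\<bar>) \<le> (T/b0) powr (1/p)" using c(1) by (intro cSUP_least) auto
    thus ?thesis using bd key by (simp add: PInf in_lk_def lk_norm_def)
  next
    case MInf thus ?thesis using k by simp
  qed
qed

lemma part2:
  fixes a b :: "int \<Rightarrow> real" and \<kappa> :: ereal and U :: "nat \<Rightarrow> int \<Rightarrow> real"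
  assumes p: "0 < p" and a: "\<forall>n. 0 < a n" and b: "\<forall>n. 0 < b n"
    and b0: "0 < b0" "\<forall>n. b0 \<le> b n" and lim: "filterlim b at_top cofinite"
    and UE: "\<forall>k. in_E p a b (U k)" and M: "\<forall>k. E_norm p a b (U k) \<le> M" and kap: "ereal p \<le> \<kappa>"
  shows "\<exists>\<phi> v. strict_mono \<phi> \<and> in_lk \<kappa> v \<and> (\<lambda>k. lk_norm \<kappa> (\<lambda>n. U (\<phi> k) n - v n)) \<longlonglongrightarrow> 0"
proof -
  define K0 where "K0 = M powr p"
  have TK: "infsum (E_terms p a b (U k)) UNIV \<le> K0" for k
  proof -
    note D = Dprops[OF a b UE[rule_format, of k]]
    have "infsum (E_terms p a b (U k)) UNIV = E_norm p a b (U k) powr p"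
      using D(3,4) p by (simp add: powr_powr)
    also have "\<dots> \<le> K0" unfolding K0_def
      by (rule powr_mono2) (use p M[rule_format, of k] D(4) in \<open>auto simp del: E_norm_def\<close>)
    finally show ?thesis .
  qed
  have ws: "(\<lambda>n. b n * \<bar>U k n\<bar> powr p) summable_on UNIV" for k
    using Dprops(1)[OF a b UE[rule_format, of k]] .
  have wK: "infsum (\<lambda>n. b n * \<bar>U k n\<bar> powr p) UNIV \<le> K0" for k
    using Dprops(2)[OF a b UE[rule_format, of k]] TK[of k] by linarith
  have bnd: "\<bar>U k n\<bar> \<le> (K0/b0) powr (1/p)" for k n
    using core(1)[OF p b0 ws wK] by blast
  obtain \<phi> v where phi: "strict_mono \<phi>" and pw: "\<forall>n. (\<lambda>k. U (\<phi> k) n) \<longlonglongrightarrow> v n"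
    using extract_subseq[of U, OF bnd] by blast
  have nnb: "0 \<le> b n * \<bar>x\<bar> powr p" for n x using b by (simp add: less_imp_le)
  have finv: "sum (\<lambda>n. b n * \<bar>v n\<bar> powr p) F \<le> K0" if F: "finite F" for F
  proof (rule LIMSEQ_le_const2)
    show "(\<lambda>k. sum (\<lambda>n. b n * \<bar>U (\<phi> k) n\<bar> powr p) F) \<longlonglongrightarrow> sum (\<lambda>n. b n * \<bar>v n\<bar> powr p) F"
    proof (intro tendsto_sum tendsto_mult_left)
      fix n
      show "(\<lambda>k. \<bar>U (\<phi> k) n\<bar> powr p) \<longlonglongrightarrow> \<bar>v n\<bar> powr p"
        by (rule tendsto_powr2) (use pw p in \<open>auto intro: tendsto_rabs\<close>)
    qed
    show "\<exists>N. \<forall>k\<ge>N. sum (\<lambda>n. b n * \<bar>U (\<phi> k) n\<bar> powr p) F \<le> K0"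
    proof (intro exI allI impI)
      fix k
      have "sum (\<lambda>n. b n * \<bar>U (\<phi> k) n\<bar> powr p) F \<le> infsum (\<lambda>n. b n * \<bar>U (\<phi> k) n\<bar> powr p) UNIV"
        by (rule finite_sum_le_infsum[OF ws]) (use F nnb in auto)
      thus "sum (\<lambda>n. b n * \<bar>U (\<phi> k) n\<bar> powr p) F \<le> K0" using wK[of "\<phi> k"] by linarith
    qed
  qed
  have vs: "(\<lambda>n. b n * \<bar>v n\<bar> powr p) summable_on UNIV"
    by (rule nonneg_bdd_above_summable_on) (use nnb finv in \<open>auto intro!: bdd_aboveI2\<close>)
  have vK: "infsum (\<lambda>n. b n * \<bar>v n\<bar> powr p) UNIV \<le> K0"
    by (rule infsum_le_finite_sums[OF vs]) (use finv in auto)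
  define w where "w = (\<lambda>k n. U (\<phi> k) n - v n)"
  define K where "K = 2 powr p * (K0 + K0)"
  have wle: "b n * \<bar>w k n\<bar> powr p \<le> 2 powr p * (b n * \<bar>U (\<phi> k) n\<bar> powr p + b n * \<bar>v n\<bar> powr p)" for k n
  proof -
    have "b n * \<bar>w k n\<bar> powr p \<le> b n * (2 powr p * (\<bar>U (\<phi> k) n\<bar> powr p + \<bar>v n\<bar> powr p))"
      unfolding w_def by (intro mult_left_mono diff_powr) (use p b in \<open>auto simp: less_imp_le\<close>)
    thus ?thesis by (simp add: algebra_simps)
  qed
  have gs: "(\<lambda>n. 2 powr p * (b n * \<bar>U (\<phi> k) n\<bar> powr p + b n * \<bar>v n\<bar> powr p)) summable_on UNIV" for k
    by (intro summable_on_cmult_right summable_on_add ws vs)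
  have wsum: "(\<lambda>n. b n * \<bar>w k n\<bar> powr p) summable_on UNIV" for k
    by (rule summable_on_comparison_test[OF gs]) (use wle nnb in auto)
  have wKK: "infsum (\<lambda>n. b n * \<bar>w k n\<bar> powr p) UNIV \<le> K" for k
  proof -
    have "infsum (\<lambda>n. b n * \<bar>w k n\<bar> powr p) UNIV \<le> infsum (\<lambda>n. 2 powr p * (b n * \<bar>U (\<phi> k) n\<bar> powr p + b n * \<bar>v n\<bar> powr p)) UNIV"
      by (rule infsum_mono[OF wsum gs]) (use wle in auto)
    also have "\<dots> = 2 powr p * (infsum (\<lambda>n. b n * \<bar>U (\<phi> k) n\<bar> powr p) UNIV + infsum (\<lambda>n. b n * \<bar>v n\<bar> powr p) UNIV)"
      by (simp add: infsum_cmult_right infsum_add ws vs summable_on_add)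
    also have "\<dots> \<le> K" unfolding K_def using wK[of "\<phi> k"] vK by (intro mult_left_mono) auto
    finally show ?thesis .
  qed
  have wpw: "\<forall>n. (\<lambda>k. w k n) \<longlonglongrightarrow> 0"
    unfolding w_def using pw by (auto intro: LIM_zero)
  define S where "S = (\<lambda>k. infsum (\<lambda>n. \<bar>w k n\<bar> powr p) UNIV)"
  have S0: "S \<longlonglongrightarrow> 0" unfolding S_def
    by (rule conv0[OF p b0 lim]) (use wsum wKK wpw in auto)
  have Snn: "0 \<le> S k" for k unfolding S_def by (rule infsum_nonneg) auto
  define B where "B = (K/b0) powr (1/p)"
  have wB: "\<forall>n. \<bar>w k n\<bar> \<le> B" for k unfolding B_def using core(1)[OF p b0 wsum wKK] .
  have wsp: "(\<lambda>n. \<bar>w k n\<bar> powr p) summable_on UNIV" for k using core(2)[OF p b0 wsum wKK] .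
  note cv = core[OF p b0 vs vK]
  show ?thesis
  proof (cases \<kappa>)
    case (real t)
    hence tp: "p \<le> t" using kap by simp
    have inv: "in_lk \<kappa> v" using cv(4) tp by (simp add: real in_lk_def)
    have "(\<lambda>k. infsum (\<lambda>n. \<bar>w k n\<bar> powr t) UNIV) \<longlonglongrightarrow> 0"
    proof (rule tendsto_sandwich)
      show "\<forall>\<^sub>F k in sequentially. 0 \<le> infsum (\<lambda>n. \<bar>w k n\<bar> powr t) UNIV"
        by (intro always_eventually allI infsum_nonneg) auto
      show "\<forall>\<^sub>F k in sequentially. infsum (\<lambda>n. \<bar>w k n\<bar> powr t) UNIV \<le> B powr (t - p) * S k"
        unfolding S_def using kbound(2)[OF wB wsp tp] by (intro always_eventually allI) auto
      show "(\<lambda>k. B powr (t - p) * S k) \<longlonglongrightarrow> 0" using tendsto_mult_right_zero[OF S0] by simp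
    qed auto
    hence "(\<lambda>k. infsum (\<lambda>n. \<bar>w k n\<bar> powr t) UNIV powr (1/t)) \<longlonglongrightarrow> 0"
      by (rule tendsto_zero_powrI[where b="1/t"]) (use p tp in \<open>auto intro!: always_eventually infsum_nonneg\<close>)
    hence "(\<lambda>k. lk_norm \<kappa> (\<lambda>n. U (\<phi> k) n - v n)) \<longlonglongrightarrow> 0"
      by (simp add: real lk_norm_def w_def)
    thus ?thesis using inv phi by blast
  next
    case PInf
    have inv: "in_lk \<kappa> v" using cv(1) by (auto simp: PInf in_lk_def intro!: bdd_aboveI2)
    have "(\<lambda>k. SUP n. \<bar>w k n\<bar>) \<longlonglongrightarrow> 0"
    proof (rule tendsto_sandwich)
      show "\<forall>\<^sub>F k in sequentially. 0 \<le> (SUP n. \<bar>w k n\<bar>)"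
      proof (intro always_eventually allI)
        fix k
        have "\<bar>w k 0\<bar> \<le> (SUP n. \<bar>w k n\<bar>)"
          by (rule cSUP_upper) (use wB in \<open>auto intro!: bdd_aboveI2\<close>)
        thus "0 \<le> (SUP n. \<bar>w k n\<bar>)" by linarith
      qed
      show "\<forall>\<^sub>F k in sequentially. (SUP n. \<bar>w k n\<bar>) \<le> S k powr (1/p)"
        unfolding S_def using sup_bound[OF p wsp] by (intro always_eventually allI cSUP_least) auto
      show "(\<lambda>k. S k powr (1/p)) \<longlonglongrightarrow> 0"
        by (rule tendsto_zero_powrI[OF S0, where b="1/p"]) (use p Snn in auto)
    qed auto
    hence "(\<lambda>k. lk_norm \<kappa> (\<lambda>n. U (\<phi> k) n - v n)) \<longlonglongrightarrow> 0"
      by (simp add: PInf lk_norm_def w_def)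
    thus ?thesis using inv phi by blast
  next
    case MInf thus ?thesis using kap by simp
  qed
qed

theorem lemma2p1:
  fixes p q r b0 :: real and a b c :: "int \<Rightarrow> real"
  assumes "1 < p" and "p < q" and "\<exists>m::nat. m > 0 \<and> p / 2 = real m" and "1 \<le> r"
    and "\<forall>n. 0 < a n" and "\<forall>n. 0 < b n" and "\<forall>n. 0 < c n"
    and C1_pos: "0 < b0" and C1_lower: "\<forall>n. b0 \<le> b n"
    and C1_lim: "filterlim b at_top cofinite"
  shows "\<forall>\<kappa>::ereal. ereal p \<le> \<kappa> \<longrightarrow>
     (\<forall>u \<in> D_set p q r a b c. in_lk \<kappa> u \<and> lk_norm \<kappa> u \<le> b0 powr (-1 / p) * E_norm p a b u)
   \<and> (\<forall>U :: nat \<Rightarrow> int \<Rightarrow> real. (\<forall>k. U k \<in> D_set p q r a b c) \<and> (\<exists>M. \<forall>k. E_norm p a b (U k) \<le> M)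
        \<longrightarrow> (\<exists>\<phi> v. strict_mono \<phi> \<and> in_lk \<kappa> v \<and>
               (\<lambda>k. lk_norm \<kappa> (\<lambda>n. U (\<phi> k) n - v n)) \<longlonglongrightarrow> 0))"
proof (rule allI, rule impI, rule conjI)
  fix \<kappa> :: ereal assume k: "ereal p \<le> \<kappa>"
  have p: "0 < p" using assms(1) by simp
  show "\<forall>u \<in> D_set p q r a b c. in_lk \<kappa> u \<and> lk_norm \<kappa> u \<le> b0 powr (-1 / p) * E_norm p a b u"
  proof
    fix u assume "u \<in> D_set p q r a b c"
    hence "in_E p a b u" by (simp add: D_set_def)
    thus "in_lk \<kappa> u \<and> lk_norm \<kappa> u \<le> b0 powr (-1 / p) * E_norm p a b u"
      using part1[OF p assms(5,6) C1_pos C1_lower _ k] by blast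
  qed
  show "\<forall>U :: nat \<Rightarrow> int \<Rightarrow> real. (\<forall>k. U k \<in> D_set p q r a b c) \<and> (\<exists>M. \<forall>k. E_norm p a b (U k) \<le> M)
        \<longrightarrow> (\<exists>\<phi> v. strict_mono \<phi> \<and> in_lk \<kappa> v \<and>
               (\<lambda>k. lk_norm \<kappa> (\<lambda>n. U (\<phi> k) n - v n)) \<longlonglongrightarrow> 0)"
  proof (intro allI impI)
    fix U :: "nat \<Rightarrow> int \<Rightarrow> real"
    assume h: "(\<forall>k. U k \<in> D_set p q r a b c) \<and> (\<exists>M. \<forall>k. E_norm p a b (U k) \<le> M)"
    then obtain M where M: "\<forall>k. E_norm p a b (U k) \<le> M" by blast
    have UE: "\<forall>k. in_E p a b (U k)" using h by (simp add: D_set_def)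
    show "\<exists>\<phi> v. strict_mono \<phi> \<and> in_lk \<kappa> v \<and> (\<lambda>k. lk_norm \<kappa> (\<lambda>n. U (\<phi> k) n - v n)) \<longlonglongrightarrow> 0"
      by (rule part2[OF p assms(5,6) C1_pos C1_lower C1_lim UE M k])
  qed
qed

end
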